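(* Let $g:\mathbb{F}_{2^n}\to\mathbb{F}_2$ and let $u_1,\ldots,u_\tau$ be pairwise distinct elements of $\mathbb{F}_{2^n}$. The following are equivalent: 1) $D_{u_i}D_{u_j}g(x)=0$ for all $x$ and all $1\le i<j\le\tau$ (i.e. $g$ satisfies property $(\mathbf{P}_\tau)$ with defining set $\{u_1,\ldots,u_\tau\}$); 2) there exist Boolean functions $g_1,\ldots,g_\tau$ on $\mathbb{F}_{2^n}$ such that $g(x+\sum_{i=1}^\tau w_iu_i)=g(x)+\sum_{i=1}^\tau w_ig_i(x)$ for all $x\in\mathbb{F}_{2^n}$ and all $w=(w_1,\ldots,w_\tau)\in\mathbb{F}_2^\tau$. Moreover, if these hold, then the functions $g_i$ in 2) are exactly $g_i=D_{u_i}g$, $i=1,\ldots,\tau$.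
   Context: $D_ag(x)=g(x)+g(x+a)$; $D_aD_bg(x)=g(x)+g(x+a)+g(x+b)+g(x+a+b)$. A Boolean function $g$ satisfies property $(\mathbf{P}_\tau)$ with defining set $\{u_1,\ldots,u_\tau\}$ if $u_1,\ldots,u_\tau$ are pairwise distinct and $D_{u_i}D_{u_j}g=0$ for all $1\le i<j\le\tau$. *)

theory Defs
  imports Main "HOL-Library.Z2" "HOL-Number_Theory.Residues"
begin

definition D :: "'a::field \<Rightarrow> ('a \<Rightarrow> bit) \<Rightarrow> 'a \<Rightarrow> bit" where
  "D a g x = g x + g (x + a)"

definition DD :: "'a::field \<Rightarrow> 'a \<Rightarrow> ('a \<Rightarrow> bit) \<Rightarrow> 'a \<Rightarrow> bit" where
  "DD a b g x = g x + g (x + a) + g (x + b) + g (x + a + b)"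

definition prop_P :: "nat \<Rightarrow> ('a::field \<Rightarrow> bit) \<Rightarrow> (nat \<Rightarrow> 'a) \<Rightarrow> bool" where
  "prop_P \<tau> g u \<longleftrightarrow> inj_on u {1..\<tau>} \<and>
     (\<forall>i j. 1 \<le> i \<longrightarrow> i < j \<longrightarrow> j \<le> \<tau> \<longrightarrow> (\<forall>x. DD (u i) (u j) g x = 0))"

end

theory Submission
  imports Defs
begin

declare add_bit_eq_xor[simp del] mult_bit_eq_and[simp del]

lemma bit_add_self: "(a::bit) + a = 0"
  by (cases a) auto

lemma bit3: "(p::bit) + (p + q) = q"
  by (cases p; cases q) auto

lemma g_shift: "g (y + a) = g y + D a g y"
  unfolding D_def by (rule bit3[symmetric])

lemma DD_D: "DD a b g x = D a g x + D a g (x + b)"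
proof -
  have e: "x + a + b = x + b + a" by (simp add: algebra_simps)
  show ?thesis unfolding DD_def D_def e by (simp only: add.assoc)
qed

lemma DD_sym: "DD a b g x = DD b a g x"
proof -
  have e: "x + a + b = x + b + a" by (simp add: algebra_simps)
  show ?thesis unfolding DD_def e by (simp only: add.assoc add.left_commute)
qed

lemma bit_eq_of_sum0: "(p::bit) + q = 0 \<Longrightarrow> p = q"
  by (metis add_diff_cancel_left' diff_add_cancel bit_add_self add.commute)

lemma periodic:
  assumes "finite S" "\<forall>b\<in>S. \<forall>x. D a g (x + u b) = D a g x"
  shows "D a g (x + sum u S) = D a g x"
  using assms
proof (induction S arbitrary: x rule: finite_induct)
  case empty then show ?case by simp
next
  case (insert c S)
  have "D a g (x + sum u (insert c S)) = D a g ((x + sum u S) + u c)"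
    using insert by (simp add: algebra_simps)
  also have "\<dots> = D a g (x + sum u S)" using insert by auto
  also have "\<dots> = D a g x" using insert by auto
  finally show ?case .
qed

lemma main_sum:
  fixes u :: "nat \<Rightarrow> 'a::field" and g :: "'a \<Rightarrow> bit"
  assumes P: "\<forall>i j. 1 \<le> i \<longrightarrow> i < j \<longrightarrow> j \<le> \<tau> \<longrightarrow> (\<forall>x. DD (u i) (u j) g x = 0)"
  assumes "finite S" "S \<subseteq> {1..\<tau>}"
  shows "g (x + sum u S) = g x + (\<Sum>i\<in>S. D (u i) g x)"
  using assms(2,3)
proof (induction S arbitrary: x rule: finite_induct)
  case empty then show ?case by simp
next
  case (insert c S)
  have per: "\<forall>b\<in>S. \<forall>y. D (u c) g (y + u b) = D (u c) g y"
  proof (intro ballI allI)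
    fix b y assume b: "b \<in> S"
    then have "b \<noteq> c" "b \<in> {1..\<tau>}" "c \<in> {1..\<tau>}" using insert by auto
    then have "DD (u c) (u b) g y = 0"
    proof (cases "c < b")
      case True then show ?thesis using P \<open>b \<in> {1..\<tau>}\<close> \<open>c \<in> {1..\<tau>}\<close> by auto
    next
      case False then have "b < c" using \<open>b \<noteq> c\<close> by auto
      then have "DD (u b) (u c) g y = 0" using P \<open>b \<in> {1..\<tau>}\<close> \<open>c \<in> {1..\<tau>}\<close> by auto
      then show ?thesis using DD_sym by metis
    qed
    then show "D (u c) g (y + u b) = D (u c) g y"
      using DD_D bit_eq_of_sum0 by metis
  qed
  have "g (x + sum u (insert c S)) = g ((x + sum u S) + u c)"
    using insert by (simp add: algebra_simps)
  also have "\<dots> = g (x + sum u S) + D (u c) g (x + sum u S)" by (rule g_shift)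
  also have "\<dots> = g (x + sum u S) + D (u c) g x"
    using periodic[OF insert(1) per] by simp
  also have "\<dots> = g x + (\<Sum>i\<in>insert c S. D (u i) g x)"
    using insert by (simp add: algebra_simps)
  finally show ?case .
qed

lemma sum_w_field:
  "(\<Sum>i=1..(\<tau>::nat). of_bit (w i) * (u i :: 'a::field)) = sum u {i\<in>{1..\<tau>}. w i = 1}"
proof -
  have "(\<Sum>i=1..\<tau>. of_bit (w i) * u i) = (\<Sum>i=1..\<tau>. if w i = 1 then u i else 0)"
    by (rule sum.cong) (cases "w i"; auto)+
  then show ?thesis by (subst sum.inter_filter) auto
qed

lemma sum_w_bit:
  "(\<Sum>i=1..(\<tau>::nat). w i * (G i x :: bit)) = (\<Sum>i\<in>{i\<in>{1..\<tau>}. w i = 1}. G i x)"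
proof -
  have "(\<Sum>i=1..\<tau>. w i * G i x) = (\<Sum>i=1..\<tau>. if w i = 1 then G i x else 0)"
    by (rule sum.cong) (cases "w i"; auto)+
  then show ?thesis by (subst sum.inter_filter) auto
qed


theorem lemma3:
  fixes n \<tau> :: nat and g :: "'a::{field,finite} \<Rightarrow> bit" and u :: "nat \<Rightarrow> 'a"
  assumes "card (UNIV :: 'a set) = 2 ^ n"
    and "inj_on u {1..\<tau>}"
  shows "(prop_P \<tau> g u \<longleftrightarrow>
           (\<exists>G :: nat \<Rightarrow> 'a \<Rightarrow> bit. \<forall>x. \<forall>w :: nat \<Rightarrow> bit.
              g (x + (\<Sum>i=1..\<tau>. of_bit (w i) * u i)) = g x + (\<Sum>i=1..\<tau>. w i * G i x)))
       \<and> (\<forall>G :: nat \<Rightarrow> 'a \<Rightarrow> bit.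
           (\<forall>x. \<forall>w :: nat \<Rightarrow> bit.
              g (x + (\<Sum>i=1..\<tau>. of_bit (w i) * u i)) = g x + (\<Sum>i=1..\<tau>. w i * G i x))
           \<longrightarrow> (\<forall>i\<in>{1..\<tau>}. G i = D (u i) g))"
proof -
  have uniq: "\<forall>i\<in>{1..\<tau>}. G i = D (u i) g"
    if H: "\<forall>x. \<forall>w :: nat \<Rightarrow> bit.
              g (x + (\<Sum>i=1..\<tau>. of_bit (w i) * u i)) = g x + (\<Sum>i=1..\<tau>. w i * G i x)" for G
  proof (intro ballI ext)
    fix i x assume i: "i \<in> {1..\<tau>}"
    define w :: "nat \<Rightarrow> bit" where "w = (\<lambda>k. if k = i then 1 else 0)"
    have S: "{k\<in>{1..\<tau>}. w k = 1} = {i}" using i by (auto simp: w_def)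
    have "g (x + u i) = g x + G i x"
      using H[rule_format, of x w] unfolding sum_w_field sum_w_bit S by simp
    then show "G i x = D (u i) g x" using g_shift[of g x "u i"] by simp
  qed
  have dir2: "prop_P \<tau> g u"
    if H: "\<forall>x. \<forall>w :: nat \<Rightarrow> bit.
              g (x + (\<Sum>i=1..\<tau>. of_bit (w i) * u i)) = g x + (\<Sum>i=1..\<tau>. w i * G i x)" for G
  proof -
    have U: "\<forall>i\<in>{1..\<tau>}. G i = D (u i) g" using uniq[OF H] .
    have "DD (u i) (u j) g x = 0" if ij: "1 \<le> i" "i < j" "j \<le> \<tau>" for i j x
    proof -
      define w :: "nat \<Rightarrow> bit" where "w = (\<lambda>k. if k = i \<or> k = j then 1 else 0)"
      have S: "{k\<in>{1..\<tau>}. w k = 1} = {i, j}" using ij by (auto simp: w_def)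
      have "g (x + (u i + u j)) = g x + (G i x + G j x)"
        using H[rule_format, of x w] ij unfolding sum_w_field sum_w_bit S by simp
      moreover have "G i x = D (u i) g x" "G j x = D (u j) g x" using U ij by auto
      moreover have "g (x + u i) = g x + D (u i) g x" "g (x + u j) = g x + D (u j) g x"
        using g_shift by auto
      moreover have "\<And>p q r :: bit. p + (p + q) + (p + r) + (p + (q + r)) = 0"
        by (case_tac p; case_tac q; case_tac r) auto
      ultimately show ?thesis unfolding DD_def by (simp add: add.assoc)
    qed
    then show ?thesis unfolding prop_P_def using assms(2) by blast
  qed
  have dir1: "\<exists>G :: nat \<Rightarrow> 'a \<Rightarrow> bit. \<forall>x. \<forall>w :: nat \<Rightarrow> bit.
              g (x + (\<Sum>i=1..\<tau>. of_bit (w i) * u i)) = g x + (\<Sum>i=1..\<tau>. w i * G i x)"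
    if P: "prop_P \<tau> g u"
  proof (intro exI allI)
    fix x and w :: "nat \<Rightarrow> bit"
    show "g (x + (\<Sum>i=1..\<tau>. of_bit (w i) * u i)) = g x + (\<Sum>i=1..\<tau>. w i * D (u i) g x)"
    proof -
      have "g (x + sum u {i\<in>{1..\<tau>}. w i = 1}) = g x + (\<Sum>i\<in>{i\<in>{1..\<tau>}. w i = 1}. D (u i) g x)"
        by (rule main_sum[of \<tau> u g]) (use P in \<open>auto simp: prop_P_def\<close>)
      moreover have "(\<Sum>i=1..\<tau>. w i * D (u i) g x) = (\<Sum>i\<in>{i\<in>{1..\<tau>}. w i = 1}. D (u i) g x)"
        by (rule sum_w_bit)
      ultimately show ?thesis by (simp only: sum_w_field)
    qed
  qed
  show ?thesis using uniq dir1 dir2 by blast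
qed

end
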